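(* Let $A\in\mathbb{R}^{n\times n}$ be nonsingular with $A\geq 0$ and $A^{-1}\geq 0$, and let $(U_k^{(i)},V_k^{(i)},E_k)_{k=1}^{p}$, $i=1,2$, be two weak regular multisplittings of $A$ (with the same weighting matrices $E_k$). If $V_k^{(2)}\geq V_k^{(1)}$ for each $k=1,\ldots,p$, then $\rho(H_1)\leq\rho(H_2)<1$, where $H_i=\sum_{k=1}^{p}E_k[U_k^{(i)}]^{-1}V_k^{(i)}$ for $i=1,2$.
   Context: Inequalities are entrywise; $\rho(\cdot)$ is the spectral radius. A splitting $A=U-V$ of $A\in\mathbb{R}^{n\times n}$ is weak regular if $U$ is nonsingular, $U^{-1}\geq 0$ and $U^{-1}V\geq 0$. A weak regular multisplitting of $A$ is a triplet $(U_k,V_k,E_k)_{k=1}^{p}$ where each $A=U_k-V_k$ is a weak regular splitting and each $E_k\geq 0$ is an $n\times n$ diagonal matrix with $\sum_{k=1}^{p}E_k=I$. *)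

theory Defs
  imports "Jordan_Normal_Form.Spectral_Radius"
begin

text \<open>Real n x n matrices are JNF matrices in carrier_mat n n. Inequalities between
matrices are entrywise (the library order on mat).\<close>

definition nonneg_mat :: "real mat \<Rightarrow> bool" where
  "nonneg_mat A \<longleftrightarrow> (\<forall>i < dim_row A. \<forall>j < dim_col A. A $$ (i, j) \<ge> 0)"

definition inv_mat :: "real mat \<Rightarrow> real mat" where
  "inv_mat A = (SOME B. inverts_mat A B \<and> inverts_mat B A)"

definition rho :: "real mat \<Rightarrow> real" where
  "rho A = spectral_radius (map_mat complex_of_real A)"

definition weak_regular_splitting :: "nat \<Rightarrow> real mat \<Rightarrow> real mat \<Rightarrow> real mat \<Rightarrow> bool" where
  "weak_regular_splitting n A U V \<longleftrightarrow>
     A \<in> carrier_mat n n \<and> U \<in> carrier_mat n n \<and> V \<in> carrier_mat n n \<and>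
     A = U - V \<and> invertible_mat U \<and> nonneg_mat (inv_mat U) \<and> nonneg_mat (inv_mat U * V)"

fun msum :: "nat \<Rightarrow> (nat \<Rightarrow> real mat) \<Rightarrow> nat \<Rightarrow> real mat" where
  "msum n f 0 = 0\<^sub>m n n"
| "msum n f (Suc p) = msum n f p + f p"

text \<open>Weak regular multisplitting (U_k, V_k, E_k), k = 0..p-1 (i.e. k = 1..p in the paper).\<close>
definition weak_regular_multisplitting ::
  "nat \<Rightarrow> real mat \<Rightarrow> nat \<Rightarrow> (nat \<Rightarrow> real mat) \<Rightarrow> (nat \<Rightarrow> real mat) \<Rightarrow> (nat \<Rightarrow> real mat) \<Rightarrow> bool" where
  "weak_regular_multisplitting n A p U V E \<longleftrightarrow>
     (\<forall>k < p. weak_regular_splitting n A (U k) (V k) \<and>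
              E k \<in> carrier_mat n n \<and> diagonal_mat (E k) \<and> nonneg_mat (E k)) \<and>
     msum n E p = 1\<^sub>m n"

definition iter_mat :: "nat \<Rightarrow> nat \<Rightarrow> (nat \<Rightarrow> real mat) \<Rightarrow> (nat \<Rightarrow> real mat) \<Rightarrow> (nat \<Rightarrow> real mat) \<Rightarrow> real mat" where
  "iter_mat n p U V E = msum n (\<lambda>k. E k * (inv_mat (U k) * V k)) p"

end

theory Submission imports Defs begin

lemma mv_entry: "A \<in> carrier_mat n m \<Longrightarrow> v \<in> carrier_vec m \<Longrightarrow> a < n \<Longrightarrow>
  (A *\<^sub>v v) $ a = (\<Sum>j\<in>{0..<m}. A $$ (a,j) * v $ j)"
  by (simp add: scalar_prod_def)

lemma mm_entry: "A \<in> carrier_mat n m \<Longrightarrow> B \<in> carrier_mat m l \<Longrightarrow> a < n \<Longrightarrow> b < l \<Longrightarrow>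
  (A * B) $$ (a,b) = (\<Sum>j\<in>{0..<m}. A $$ (a,j) * B $$ (j,b))"
  by (simp add: scalar_prod_def)

lemma nonneg_mult:
  assumes "A \<in> carrier_mat n m" "B \<in> carrier_mat m l" "nonneg_mat A" "nonneg_mat B"
  shows "nonneg_mat (A * B)"
  unfolding nonneg_mat_def
proof (intro allI impI)
  fix i j assume "i < dim_row (A * B)" "j < dim_col (A * B)"
  thus "0 \<le> (A * B) $$ (i, j)" using assms unfolding nonneg_mat_def
    by (subst mm_entry[OF assms(1,2)]) (auto intro!: sum_nonneg)
qed

lemma inv_mat_props:
  assumes "invertible_mat U" "U \<in> carrier_mat n n"
  shows "inv_mat U \<in> carrier_mat n n" "U * inv_mat U = 1\<^sub>m n" "inv_mat U * U = 1\<^sub>m n"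
proof -
  have ex: "\<exists>B. inverts_mat U B \<and> inverts_mat B U" using assms(1) unfolding invertible_mat_def by auto
  have h: "inverts_mat U (inv_mat U) \<and> inverts_mat (inv_mat U) U"
    unfolding inv_mat_def by (rule someI_ex[OF ex])
  hence 1: "U * inv_mat U = 1\<^sub>m n" and 2: "inv_mat U * U = 1\<^sub>m (dim_row (inv_mat U))"
    using assms(2) unfolding inverts_mat_def by auto
  have "dim_col (inv_mat U) = n" using arg_cong[OF 1, of dim_col] by simp
  moreover have "dim_row (inv_mat U) = n" using arg_cong[OF 2, of dim_col] assms(2) by simp
  ultimately show c: "inv_mat U \<in> carrier_mat n n" by auto
  show "U * inv_mat U = 1\<^sub>m n" by fact
  show "inv_mat U * U = 1\<^sub>m n" using 2 c by simp
qed

lemma row_pos: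
  assumes W: "W \<in> carrier_mat n n" and Z: "Z \<in> carrier_mat n n" and WZ: "W * Z = 1\<^sub>m n"
    and nn: "nonneg_mat W" and a: "a < n"
  shows "(W *\<^sub>v vec n (\<lambda>_. 1)) $ a > 0"
proof -
  have ge: "\<And>j. j < n \<Longrightarrow> W $$ (a,j) \<ge> 0" using nn W a unfolding nonneg_mat_def by auto
  have eq: "(W *\<^sub>v vec n (\<lambda>_. 1)) $ a = (\<Sum>j\<in>{0..<n}. W $$ (a,j))"
    using mv_entry[OF W _ a, of "vec n (\<lambda>_. 1)"] by simp
  have "(W *\<^sub>v vec n (\<lambda>_. 1)) $ a \<noteq> 0"
  proof
    assume "(W *\<^sub>v vec n (\<lambda>_. 1)) $ a = 0"
    hence "\<forall>j\<in>{0..<n}. W $$ (a,j) = 0" using eq ge sum_nonneg_eq_0_iff[of "{0..<n}" "\<lambda>j. W $$ (a,j)"] by auto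
    hence "(W * Z) $$ (a,a) = 0" using mm_entry[OF W Z a a] by simp
    thus False using WZ a by simp
  qed
  moreover have "(W *\<^sub>v vec n (\<lambda>_. 1)) $ a \<ge> 0" using eq ge by (auto intro: sum_nonneg)
  ultimately show ?thesis by linarith
qed

lemma msum_props:
  assumes "\<And>k. k < p \<Longrightarrow> f k \<in> carrier_mat n n"
  shows "msum n f p \<in> carrier_mat n n \<and> (\<forall>a<n. \<forall>b<n. msum n f p $$ (a,b) = (\<Sum>k<p. f k $$ (a,b)))"
  using assms
proof (induction p)
  case (Suc p)
  have h: "\<And>k. k < p \<Longrightarrow> f k \<in> carrier_mat n n" using Suc.prems by auto
  have c: "msum n f p \<in> carrier_mat n n" "f p \<in> carrier_mat n n" using Suc.IH[OF h] Suc.prems by auto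
  show ?case using Suc.IH[OF h] c by auto
qed auto

lemma diag_mult_entry:
  assumes E: "E \<in> carrier_mat n n" "diagonal_mat E" and P: "P \<in> carrier_mat n l" and a: "a < n" and b: "b < l"
  shows "(E * P) $$ (a,b) = E $$ (a,a) * P $$ (a,b)"
proof -
  have "(E * P) $$ (a,b) = (\<Sum>j\<in>{0..<n}. E $$ (a,j) * P $$ (j,b))" by (rule mm_entry[OF E(1) P a b])
  also have "\<dots> = (\<Sum>j\<in>{0..<n}. if j = a then E $$ (a,a) * P $$ (a,b) else 0)"
    using E a by (intro sum.cong) (auto simp: diagonal_mat_def)
  also have "\<dots> = E $$ (a,a) * P $$ (a,b)" using a by simp
  finally show ?thesis .
qed


lemma ev_of_spectrum:
  assumes "l \<in> spectrum M"
  obtains v where "v \<in> carrier_vec (dim_row M)" "v \<noteq> 0\<^sub>v (dim_row M)" "M *\<^sub>v v = l \<cdot>\<^sub>v v"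
  using assms unfolding spectrum_def eigenvalue_def eigenvector_def by auto

lemma nonzero_entry:
  assumes "v \<in> carrier_vec n" "v \<noteq> 0\<^sub>v n"
  obtains j where "j < n" "v $ j \<noteq> 0"
  using assms by (metis carrier_vecD eq_vecI index_zero_vec(1) index_zero_vec(2))

lemma rho_attained:
  assumes "H \<in> carrier_mat n n" "n > 0"
  obtains l v where "rho H = cmod l" "v \<in> carrier_vec n" "v \<noteq> 0\<^sub>v n"
    "map_mat complex_of_real H *\<^sub>v v = l \<cdot>\<^sub>v v"
proof -
  have Mc: "map_mat complex_of_real H \<in> carrier_mat n n" using assms by auto
  from spectral_radius_mem_max(1)[OF Mc assms(2)] obtain l where
    l: "l \<in> spectrum (map_mat complex_of_real H)" "rho H = cmod l"
    unfolding rho_def by auto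
  from ev_of_spectrum[OF l(1)] Mc obtain v where "v \<in> carrier_vec n" "v \<noteq> 0\<^sub>v n"
    "map_mat complex_of_real H *\<^sub>v v = l \<cdot>\<^sub>v v" by auto
  thus ?thesis using that l(2) by blast
qed

lemma ev_entry_bound:
  assumes H: "H \<in> carrier_mat n n" and nn: "nonneg_mat H" and v: "v \<in> carrier_vec n"
    and ev: "map_mat complex_of_real H *\<^sub>v v = l \<cdot>\<^sub>v v" and i: "i < n"
  shows "cmod l * cmod (v $ i) \<le> (\<Sum>j\<in>{0..<n}. H $$ (i,j) * cmod (v $ j))"
proof -
  have Mc: "map_mat complex_of_real H \<in> carrier_mat n n" using H by auto
  have "cmod l * cmod (v $ i) = cmod ((l \<cdot>\<^sub>v v) $ i)" using v i by (simp add: norm_mult)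
  also have "\<dots> = cmod ((map_mat complex_of_real H *\<^sub>v v) $ i)" using ev by simp
  also have "\<dots> = cmod (\<Sum>j\<in>{0..<n}. complex_of_real (H $$ (i,j)) * v $ j)"
    using mv_entry[OF Mc v i] H i by simp
  also have "\<dots> \<le> (\<Sum>j\<in>{0..<n}. cmod (complex_of_real (H $$ (i,j)) * v $ j))" by (rule norm_sum)
  also have "\<dots> = (\<Sum>j\<in>{0..<n}. H $$ (i,j) * cmod (v $ j))"
    using nn H i unfolding nonneg_mat_def by (intro sum.cong) (auto simp: norm_mult)
  finally show ?thesis .
qed

lemma rho_lt1:
  assumes H: "H \<in> carrier_mat n n" and n: "n > 0" and nn: "nonneg_mat H"
    and x: "x \<in> carrier_vec n" and xpos: "\<And>i. i < n \<Longrightarrow> x $ i > 0"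
    and Hx: "\<And>i. i < n \<Longrightarrow> (H *\<^sub>v x) $ i < x $ i"
  shows "rho H < 1"
proof -
  obtain l v where r: "rho H = cmod l" and v: "v \<in> carrier_vec n" "v \<noteq> 0\<^sub>v n"
    and ev: "map_mat complex_of_real H *\<^sub>v v = l \<cdot>\<^sub>v v" using rho_attained[OF H n] by blast
  define f where "f i = cmod (v $ i) / x $ i" for i
  define t where "t = Max (f ` {0..<n})"
  have fin: "finite (f ` {0..<n})" and ne: "f ` {0..<n} \<noteq> {}" using n by auto
  obtain i where i: "i < n" "t = f i" using Max_in[OF fin ne] unfolding t_def by auto
  have tge: "\<And>j. j < n \<Longrightarrow> f j \<le> t" unfolding t_def using fin by auto
  obtain j where j: "j < n" "v $ j \<noteq> 0" using nonzero_entry[OF v] by blast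
  have "f j > 0" using j xpos unfolding f_def by auto
  hence tpos: "t > 0" using tge[OF j(1)] by auto
  have bnd: "\<And>j. j < n \<Longrightarrow> cmod (v $ j) \<le> t * x $ j"
    using tge xpos unfolding f_def by (simp add: divide_le_eq)
  have vi: "cmod (v $ i) = t * x $ i" using i xpos[OF i(1)] unfolding f_def by simp
  have "cmod l * cmod (v $ i) \<le> (\<Sum>j\<in>{0..<n}. H $$ (i,j) * cmod (v $ j))"
    by (rule ev_entry_bound[OF H nn v(1) ev i(1)])
  also have "\<dots> \<le> (\<Sum>j\<in>{0..<n}. H $$ (i,j) * (t * x $ j))"
    using nn H i bnd unfolding nonneg_mat_def by (intro sum_mono mult_left_mono) auto
  also have "\<dots> = t * (H *\<^sub>v x) $ i"
    by (simp add: mv_entry[OF H x i(1)] sum_distrib_left algebra_simps)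
  also have "\<dots> < t * x $ i" using Hx[OF i(1)] tpos by simp
  also have "\<dots> = cmod (v $ i)" using vi by simp
  finally have "cmod l * cmod (v $ i) < 1 * cmod (v $ i)" by simp
  hence "cmod l < 1" by (rule mult_right_less_imp_less) simp
  thus ?thesis using r by simp
qed


lemma rho_nonneg: assumes "H \<in> carrier_mat n n" "n > 0" shows "rho H \<ge> 0"
  using rho_attained[OF assms] by (metis norm_ge_zero)

lemma rho_smult:
  assumes C: "C \<in> carrier_mat n n" and n: "n > 0" and c: "c > 0"
  shows "rho (c \<cdot>\<^sub>m C) \<le> c * rho C"
proof -
  have cC: "c \<cdot>\<^sub>m C \<in> carrier_mat n n" using C by auto
  obtain l v where r: "rho (c \<cdot>\<^sub>m C) = cmod l" and v: "v \<in> carrier_vec n" "v \<noteq> 0\<^sub>v n"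
    and ev: "map_mat complex_of_real (c \<cdot>\<^sub>m C) *\<^sub>v v = l \<cdot>\<^sub>v v" using rho_attained[OF cC n] by blast
  let ?M = "map_mat complex_of_real C"
  have Mc: "?M \<in> carrier_mat n n" using C by auto
  have "?M *\<^sub>v v = (l / of_real c) \<cdot>\<^sub>v v"
  proof (rule eq_vecI)
    fix i assume "i < dim_vec ((l / of_real c) \<cdot>\<^sub>v v)"
    hence i: "i < n" using v by auto
    have "(map_mat complex_of_real (c \<cdot>\<^sub>m C) *\<^sub>v v) $ i = of_real c * (?M *\<^sub>v v) $ i"
      using mv_entry[OF Mc v(1) i] mv_entry[of "map_mat complex_of_real (c \<cdot>\<^sub>m C)" n n v i] C i v
      by (simp add: sum_distrib_left algebra_simps)
    hence "of_real c * (?M *\<^sub>v v) $ i = l * v $ i" using ev v i by simp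
    thus "(?M *\<^sub>v v) $ i = ((l / of_real c) \<cdot>\<^sub>v v) $ i" using c v i
      by (simp add: field_simps)
  qed (insert v Mc, auto)
  hence "eigenvector ?M v (l / of_real c)" using v Mc unfolding eigenvector_def by auto
  hence "l / of_real c \<in> spectrum ?M" unfolding spectrum_def eigenvalue_def by auto
  hence "cmod (l / of_real c) \<le> rho C" unfolding rho_def
    using spectral_radius_mem_max(2)[OF Mc n] by auto
  hence "cmod l / c \<le> rho C" using c by (simp add: norm_divide)
  thus ?thesis using r c by (simp add: divide_le_eq mult.commute)
qed

lemma nonneg_pow:
  assumes C: "C \<in> carrier_mat n n" and nn: "nonneg_mat C"
  shows "nonneg_mat (C ^\<^sub>m k)"
proof (induction k)
  case 0 thus ?case using C unfolding nonneg_mat_def by auto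
next
  case (Suc k) thus ?case using nonneg_mult[OF pow_carrier_mat[OF C] C _ nn] by simp
qed

lemma growth:
  assumes C: "C \<in> carrier_mat n n" and nn: "nonneg_mat C" and w: "w \<in> carrier_vec n"
    and wnn: "\<And>i. i < n \<Longrightarrow> w $ i \<ge> 0" and a: "a \<ge> 0"
    and sub: "\<And>i. i < n \<Longrightarrow> a * w $ i \<le> (C *\<^sub>v w) $ i"
  shows "i < n \<Longrightarrow> a ^ k * w $ i \<le> ((C ^\<^sub>m k) *\<^sub>v w) $ i"
proof (induction k arbitrary: i)
  case 0 thus ?case using C w by simp
next
  case (Suc k)
  have Ck: "C ^\<^sub>m k \<in> carrier_mat n n" using C by simp
  have nk: "nonneg_mat (C ^\<^sub>m k)" by (rule nonneg_pow[OF C nn])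
  have Cw: "C *\<^sub>v w \<in> carrier_vec n" using C w by simp
  have "a ^ Suc k * w $ i = a * (a ^ k * w $ i)" by simp
  also have "\<dots> \<le> a * ((C ^\<^sub>m k) *\<^sub>v w) $ i" using Suc a by (intro mult_left_mono) auto
  also have "\<dots> = (\<Sum>j\<in>{0..<n}. (C ^\<^sub>m k) $$ (i,j) * (a * w $ j))"
    by (simp add: mv_entry[OF Ck w Suc.prems] sum_distrib_left algebra_simps)
  also have "\<dots> \<le> (\<Sum>j\<in>{0..<n}. (C ^\<^sub>m k) $$ (i,j) * (C *\<^sub>v w) $ j)"
    using nk Ck C Suc.prems sub unfolding nonneg_mat_def by (intro sum_mono mult_left_mono) auto
  also have "\<dots> = ((C ^\<^sub>m k) *\<^sub>v (C *\<^sub>v w)) $ i" by (rule mv_entry[OF Ck Cw Suc.prems, symmetric])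
  also have "\<dots> = ((C ^\<^sub>m Suc k) *\<^sub>v w) $ i" using assoc_mult_mat_vec[OF Ck C w] by simp
  finally show ?case .
qed

lemma subinv_rho:
  assumes C: "C \<in> carrier_mat n n" and n: "n > 0" and nn: "nonneg_mat C"
    and w: "w \<in> carrier_vec n" and wnn: "\<And>i. i < n \<Longrightarrow> w $ i \<ge> 0"
    and i0: "i0 < n" "w $ i0 > 0" and a: "a \<ge> 0"
    and sub: "\<And>i. i < n \<Longrightarrow> a * w $ i \<le> (C *\<^sub>v w) $ i"
  shows "a \<le> rho C"
proof (rule ccontr)
  assume "\<not> a \<le> rho C"
  hence lt: "rho C < a" by simp
  have r0: "rho C \<ge> 0" by (rule rho_nonneg[OF C n])
  define r where "r = (rho C + a) / 2"
  have rpos: "r > 0" and rlt: "rho C < r" "r < a" using lt r0 unfolding r_def by auto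
  define Cr where "Cr = (1 / r) \<cdot>\<^sub>m C"
  have Crc: "Cr \<in> carrier_mat n n" using C unfolding Cr_def by auto
  have "rho Cr \<le> (1/r) * rho C" unfolding Cr_def by (rule rho_smult[OF C n]) (use rpos in auto)
  also have "\<dots> < 1" using rlt rpos by (simp add: field_simps)
  finally have "spectral_radius (map_mat complex_of_real Cr) < 1" unfolding rho_def .
  from spectral_radius_jnf_norm_bound_less_1_upper_triangular[OF _ this] Crc
  obtain c where c: "\<And>k. norm_bound (map_mat complex_of_real Cr ^\<^sub>m k) c" by fastforce
  have bnd: "\<And>k i j. i < n \<Longrightarrow> j < n \<Longrightarrow> (Cr ^\<^sub>m k) $$ (i,j) \<le> c"
  proof -
    fix k i j assume ij: "i < n" "j < n"
    have "map_mat complex_of_real Cr ^\<^sub>m k = map_mat complex_of_real (Cr ^\<^sub>m k)"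
      using of_real_hom.mat_hom_pow[OF Crc, of k] by metis
    with c[of k] have "norm_bound (map_mat complex_of_real (Cr ^\<^sub>m k)) c" by simp
    hence "cmod (complex_of_real ((Cr ^\<^sub>m k) $$ (i,j))) \<le> c" using ij Crc
      unfolding norm_bound_def by auto
    thus "(Cr ^\<^sub>m k) $$ (i,j) \<le> c" by simp
  qed
  have nnr: "nonneg_mat Cr" using nn rpos unfolding Cr_def nonneg_mat_def by auto
  have subr: "\<And>i. i < n \<Longrightarrow> (a / r) * w $ i \<le> (Cr *\<^sub>v w) $ i"
  proof -
    fix i assume i: "i < n"
    have "(Cr *\<^sub>v w) $ i = (1/r) * (C *\<^sub>v w) $ i"
      unfolding Cr_def using mv_entry[OF C w i] mv_entry[of "(1/r) \<cdot>\<^sub>m C" n n w i] C i w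
      by (simp add: sum_distrib_left algebra_simps)
    thus "(a / r) * w $ i \<le> (Cr *\<^sub>v w) $ i" using sub[OF i] rpos
      by (simp add: divide_right_mono)
  qed
  define S where "S = (\<Sum>j\<in>{0..<n}. w $ j)"
  have key: "\<And>k. (a / r) ^ k \<le> c * S / w $ i0"
  proof -
    fix k
    have "(a / r) ^ k * w $ i0 \<le> ((Cr ^\<^sub>m k) *\<^sub>v w) $ i0"
      by (rule growth[OF Crc nnr w wnn _ subr i0(1)]) (use a rpos in auto)
    also have "\<dots> = (\<Sum>j\<in>{0..<n}. (Cr ^\<^sub>m k) $$ (i0,j) * w $ j)"
      by (rule mv_entry[OF pow_carrier_mat[OF Crc] w i0(1)])
    also have "\<dots> \<le> (\<Sum>j\<in>{0..<n}. c * w $ j)"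
      using bnd wnn i0 by (intro sum_mono mult_right_mono) auto
    also have "\<dots> = c * S" unfolding S_def by (simp add: sum_distrib_left)
    finally show "(a / r) ^ k \<le> c * S / w $ i0" using i0 by (simp add: le_divide_eq)
  qed
  have "1 < a / r" using rlt rpos by simp
  from real_arch_pow[OF this] obtain k where "c * S / w $ i0 < (a / r) ^ k" by blast
  with key[of k] show False by simp
qed

lemma rho_mono:
  assumes B: "B \<in> carrier_mat n n" and C: "C \<in> carrier_mat n n" and n: "n > 0"
    and nn: "nonneg_mat B" and le: "\<And>i j. i < n \<Longrightarrow> j < n \<Longrightarrow> B $$ (i,j) \<le> C $$ (i,j)"
  shows "rho B \<le> rho C"
proof -
  obtain l v where r: "rho B = cmod l" and v: "v \<in> carrier_vec n" "v \<noteq> 0\<^sub>v n"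
    and ev: "map_mat complex_of_real B *\<^sub>v v = l \<cdot>\<^sub>v v" using rho_attained[OF B n] by blast
  define w where "w = vec n (\<lambda>i. cmod (v $ i))"
  have w: "w \<in> carrier_vec n" unfolding w_def by simp
  have nnC: "nonneg_mat C" unfolding nonneg_mat_def
  proof (intro allI impI)
    fix i j assume "i < dim_row C" "j < dim_col C"
    hence ij: "i < n" "j < n" using C by auto
    have "0 \<le> B $$ (i,j)" using nn B ij unfolding nonneg_mat_def by auto
    thus "0 \<le> C $$ (i,j)" using le[OF ij] by linarith
  qed
  obtain j where j: "j < n" "v $ j \<noteq> 0" using nonzero_entry[OF v] by blast
  show ?thesis unfolding r
  proof (rule subinv_rho[OF C n nnC w _ j(1)])
    show "\<And>i. i < n \<Longrightarrow> 0 \<le> w $ i" unfolding w_def by simp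
    show "0 < w $ j" unfolding w_def using j by simp
    show "0 \<le> cmod l" by simp
    fix i assume i: "i < n"
    have "cmod l * w $ i \<le> (\<Sum>j\<in>{0..<n}. B $$ (i,j) * cmod (v $ j))"
      unfolding w_def using ev_entry_bound[OF B nn v(1) ev i] i by simp
    also have "\<dots> \<le> (\<Sum>j\<in>{0..<n}. C $$ (i,j) * w $ j)"
      unfolding w_def using le i by (intro sum_mono) (simp add: mult_right_mono)
    also have "\<dots> = (C *\<^sub>v w) $ i" by (rule mv_entry[OF C w i, symmetric])
    finally show "cmod l * w $ i \<le> (C *\<^sub>v w) $ i" .
  qed
qed


lemma nonneg_entry: "nonneg_mat M \<Longrightarrow> M \<in> carrier_mat n m \<Longrightarrow> a < n \<Longrightarrow> b < m \<Longrightarrow> M $$ (a,b) \<ge> 0"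
  unfolding nonneg_mat_def by auto

lemma splitting_facts:
  assumes "weak_regular_splitting n A U V"
  shows "A \<in> carrier_mat n n" "U \<in> carrier_mat n n" "V \<in> carrier_mat n n"
    "inv_mat U \<in> carrier_mat n n" "U * inv_mat U = 1\<^sub>m n" "inv_mat U * U = 1\<^sub>m n"
    "nonneg_mat (inv_mat U)" "nonneg_mat (inv_mat U * V)"
    "inv_mat U * V = 1\<^sub>m n - inv_mat U * A"
    "\<And>a b. a < n \<Longrightarrow> b < n \<Longrightarrow> V $$ (a,b) = U $$ (a,b) - A $$ (a,b)"
proof -
  note s = assms[unfolded weak_regular_splitting_def]
  show A: "A \<in> carrier_mat n n" and U: "U \<in> carrier_mat n n" and V: "V \<in> carrier_mat n n"
    using s by auto
  note ip = inv_mat_props[OF conjunct1[OF s[THEN conjunct2, THEN conjunct2, THEN conjunct2, THEN conjunct2]] U]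
  show W: "inv_mat U \<in> carrier_mat n n" "U * inv_mat U = 1\<^sub>m n" "inv_mat U * U = 1\<^sub>m n" using ip by auto
  show "nonneg_mat (inv_mat U)" "nonneg_mat (inv_mat U * V)" using s by auto
  have AUV: "A = U - V" using s by auto
  show Ve: "\<And>a b. a < n \<Longrightarrow> b < n \<Longrightarrow> V $$ (a,b) = U $$ (a,b) - A $$ (a,b)"
    using AUV U V by auto
  have VUA: "V = U - A" using Ve U V A by (intro eq_matI) auto
  show "inv_mat U * V = 1\<^sub>m n - inv_mat U * A"
    unfolding VUA using mult_minus_distrib_mat[OF W(1) U A] W(3) by simp
qed

lemma compare_P:
  assumes s1: "weak_regular_splitting n A U1 V1" and s2: "weak_regular_splitting n A U2 V2"
    and le: "V1 \<le> V2" and Ann: "nonneg_mat A" and a: "a < n" and b: "b < n"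
  shows "(inv_mat U1 * V1) $$ (a,b) \<le> (inv_mat U2 * V2) $$ (a,b)"
proof -
  note f1 = splitting_facts[OF s1] and f2 = splitting_facts[OF s2]
  define W1 where "W1 = inv_mat U1"
  define W2 where "W2 = inv_mat U2"
  have A: "A \<in> carrier_mat n n" and U1: "U1 \<in> carrier_mat n n" and U2: "U2 \<in> carrier_mat n n"
    and W1: "W1 \<in> carrier_mat n n" and W2: "W2 \<in> carrier_mat n n"
    using f1 f2 unfolding W1_def W2_def by auto
  have D: "U2 - U1 \<in> carrier_mat n n" using U1 U2 by auto
  have nnD: "nonneg_mat (U2 - U1)" unfolding nonneg_mat_def
  proof (intro allI impI)
    fix i j assume "i < dim_row (U2 - U1)" "j < dim_col (U2 - U1)"
    hence ij: "i < n" "j < n" using U1 U2 by auto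
    have "V1 $$ (i,j) \<le> V2 $$ (i,j)" using le ij f1(3) unfolding less_eq_mat_def by auto
    thus "0 \<le> (U2 - U1) $$ (i,j)" using f1(10)[OF ij] f2(10)[OF ij] ij U1 U2 by simp
  qed
  have eq1: "W1 * (U2 - U1) = W1 * U2 - 1\<^sub>m n"
    using mult_minus_distrib_mat[OF W1 U2 U1] f1(6) unfolding W1_def by simp
  have "W1 * (U2 - U1) * W2 = (W1 * U2 - 1\<^sub>m n) * W2" using eq1 by simp
  also have "\<dots> = W1 * U2 * W2 - W2"
    using minus_mult_distrib_mat[OF mult_carrier_mat[OF W1 U2] one_carrier_mat W2] W2 by simp
  also have "W1 * U2 * W2 = W1" using assoc_mult_mat[OF W1 U2 W2] f2(5) W1 unfolding W2_def by simp
  finally have eqD: "W1 * (U2 - U1) * W2 = W1 - W2" .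
  have nn: "nonneg_mat ((W1 - W2) * A)" unfolding eqD[symmetric]
    using nonneg_mult[OF mult_carrier_mat[OF mult_carrier_mat[OF W1 D] W2] A
       nonneg_mult[OF mult_carrier_mat[OF W1 D] W2 nonneg_mult[OF W1 D _ nnD]] Ann] f1(7) f2(7)
    unfolding W1_def W2_def by blast
  have eqA: "(W1 - W2) * A = W1 * A - W2 * A" by (rule minus_mult_distrib_mat[OF W1 W2 A])
  have "((W1 - W2) * A) $$ (a,b) \<ge> 0" by (rule nonneg_entry[OF nn _ a b]) (use W1 W2 A in auto)
  hence "(W2 * A) $$ (a,b) \<le> (W1 * A) $$ (a,b)" unfolding eqA using a b W1 W2 A by simp
  thus ?thesis using f1(9) f2(9) a b W1 W2 A unfolding W1_def W2_def by simp
qed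


lemma H_entry:
  assumes M: "weak_regular_multisplitting n A p U V E" and a: "a < n" and b: "b < n"
  shows "iter_mat n p U V E \<in> carrier_mat n n"
    "iter_mat n p U V E $$ (a,b) = (\<Sum>k<p. E k $$ (a,a) * (inv_mat (U k) * V k) $$ (a,b))"
proof -
  have c: "\<And>k. k < p \<Longrightarrow> E k * (inv_mat (U k) * V k) \<in> carrier_mat n n"
    using M splitting_facts unfolding weak_regular_multisplitting_def by (meson mult_carrier_mat)
  note ms = msum_props[of p "\<lambda>k. E k * (inv_mat (U k) * V k)" n, OF c]
  show "iter_mat n p U V E \<in> carrier_mat n n" unfolding iter_mat_def using ms by auto
  have "iter_mat n p U V E $$ (a,b) = (\<Sum>k<p. (E k * (inv_mat (U k) * V k)) $$ (a,b))"
    unfolding iter_mat_def using ms a b by auto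
  also have "\<dots> = (\<Sum>k<p. E k $$ (a,a) * (inv_mat (U k) * V k) $$ (a,b))"
  proof (rule sum.cong)
    fix k assume "k \<in> {..<p}"
    hence k: "k < p" by simp
    have E: "E k \<in> carrier_mat n n" "diagonal_mat (E k)" and s: "weak_regular_splitting n A (U k) (V k)"
      using M k unfolding weak_regular_multisplitting_def by auto
    have P: "inv_mat (U k) * V k \<in> carrier_mat n n" using splitting_facts[OF s] by auto
    show "(E k * (inv_mat (U k) * V k)) $$ (a,b) = E k $$ (a,a) * (inv_mat (U k) * V k) $$ (a,b)"
      by (rule diag_mult_entry[OF E P a b])
  qed simp
  finally show "iter_mat n p U V E $$ (a,b) = (\<Sum>k<p. E k $$ (a,a) * (inv_mat (U k) * V k) $$ (a,b))" .
qed

lemma E_facts: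
  assumes M: "weak_regular_multisplitting n A p U V E" and a: "a < n"
  shows "(\<Sum>k<p. E k $$ (a,a)) = 1" "\<And>k. k < p \<Longrightarrow> E k $$ (a,a) \<ge> 0"
proof -
  have c: "\<And>k. k < p \<Longrightarrow> E k \<in> carrier_mat n n" using M unfolding weak_regular_multisplitting_def by auto
  note ms = msum_props[of p E n, OF c]
  have "msum n E p = 1\<^sub>m n" using M unfolding weak_regular_multisplitting_def by auto
  hence "\<forall>a<n. \<forall>b<n. (1\<^sub>m n :: real mat) $$ (a,b) = (\<Sum>k<p. E k $$ (a,b))" using ms by metis
  hence "(1\<^sub>m n :: real mat) $$ (a,a) = (\<Sum>k<p. E k $$ (a,a))" using a by blast
  thus "(\<Sum>k<p. E k $$ (a,a)) = 1" using a by simp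
  show "\<And>k. k < p \<Longrightarrow> E k $$ (a,a) \<ge> 0"
    using M a c unfolding weak_regular_multisplitting_def nonneg_mat_def by (metis carrier_matD)
qed

theorem corollary5p12:
  fixes n p :: nat and A :: "real mat" and U1 V1 U2 V2 E :: "nat \<Rightarrow> real mat"
  assumes "n > 0"
    and "A \<in> carrier_mat n n"
    and "invertible_mat A"
    and "nonneg_mat A"
    and "nonneg_mat (inv_mat A)"
    and "weak_regular_multisplitting n A p U1 V1 E"
    and "weak_regular_multisplitting n A p U2 V2 E"
    and "\<forall>k < p. V2 k \<ge> V1 k"
  shows "rho (iter_mat n p U1 V1 E) \<le> rho (iter_mat n p U2 V2 E) \<and>
         rho (iter_mat n p U2 V2 E) < 1"
proof -
  note n = assms(1) and A = assms(2) and M1 = assms(6) and M2 = assms(7)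
  define H1 where "H1 = iter_mat n p U1 V1 E"
  define H2 where "H2 = iter_mat n p U2 V2 E"
  have H1c: "H1 \<in> carrier_mat n n" and H2c: "H2 \<in> carrier_mat n n"
    unfolding H1_def H2_def using H_entry[OF M1 n n] H_entry[OF M2 n n] by auto
  have s1: "\<And>k. k < p \<Longrightarrow> weak_regular_splitting n A (U1 k) (V1 k)"
    and s2: "\<And>k. k < p \<Longrightarrow> weak_regular_splitting n A (U2 k) (V2 k)"
    using M1 M2 unfolding weak_regular_multisplitting_def by auto
  have nnH: "nonneg_mat H1" unfolding nonneg_mat_def
  proof (intro allI impI)
    fix a b assume "a < dim_row H1" "b < dim_col H1"
    hence ab: "a < n" "b < n" using H1c by auto
    show "0 \<le> H1 $$ (a,b)" unfolding H1_def H_entry(2)[OF M1 ab]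
    proof (intro sum_nonneg mult_nonneg_nonneg)
      fix k assume "k \<in> {..<p}"
      hence k: "k < p" by simp
      show "0 \<le> E k $$ (a,a)" by (rule E_facts(2)[OF M1 ab(1) k])
      note f = splitting_facts[OF s1[OF k]]
      show "0 \<le> (inv_mat (U1 k) * V1 k) $$ (a,b)"
        by (rule nonneg_entry[OF f(8) _ ab]) (use f in auto)
    qed
  qed
  have le: "\<And>a b. a < n \<Longrightarrow> b < n \<Longrightarrow> H1 $$ (a,b) \<le> H2 $$ (a,b)"
    unfolding H1_def H2_def
  proof -
    fix a b assume ab: "a < n" "b < n"
    show "iter_mat n p U1 V1 E $$ (a,b) \<le> iter_mat n p U2 V2 E $$ (a,b)"
      unfolding H_entry(2)[OF M1 ab] H_entry(2)[OF M2 ab]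
    proof (intro sum_mono mult_left_mono)
      fix k assume "k \<in> {..<p}"
      hence k: "k < p" by simp
      show "0 \<le> E k $$ (a,a)" by (rule E_facts(2)[OF M1 ab(1) k])
      show "(inv_mat (U1 k) * V1 k) $$ (a,b) \<le> (inv_mat (U2 k) * V2 k) $$ (a,b)"
        by (rule compare_P[OF s1[OF k] s2[OF k] _ assms(4) ab]) (use assms(8) k in auto)
    qed
  qed
  have part1: "rho H1 \<le> rho H2" by (rule rho_mono[OF H1c H2c n nnH le])
  have nnH2: "nonneg_mat H2" unfolding nonneg_mat_def
  proof (intro allI impI)
    fix a b assume "a < dim_row H2" "b < dim_col H2"
    hence ab: "a < n" "b < n" using H2c by auto
    show "0 \<le> H2 $$ (a,b)" using nnH H1c ab le[OF ab] unfolding nonneg_mat_def by force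
  qed
  let ?one = "vec n (\<lambda>_. 1) :: real vec"
  note iA = inv_mat_props[OF assms(3) A]
  define x where "x = inv_mat A *\<^sub>v ?one"
  have xc: "x \<in> carrier_vec n" unfolding x_def using iA by auto
  have xpos: "\<And>i. i < n \<Longrightarrow> x $ i > 0" unfolding x_def
    by (rule row_pos[OF iA(1) A iA(3) assms(5)])
  have Ax: "A *\<^sub>v x = ?one" unfolding x_def
    using assoc_mult_mat_vec[OF A iA(1), of ?one] iA(2) by simp
  have Px: "\<And>k a. k < p \<Longrightarrow> a < n \<Longrightarrow>
      ((inv_mat (U2 k) * V2 k) *\<^sub>v x) $ a = x $ a - (inv_mat (U2 k) *\<^sub>v ?one) $ a"
  proof -
    fix k a assume k: "k < p" and a: "a < n"
    note f = splitting_facts[OF s2[OF k]]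
    have W: "inv_mat (U2 k) \<in> carrier_mat n n" using f by auto
    have "(inv_mat (U2 k) * V2 k) *\<^sub>v x = (1\<^sub>m n - inv_mat (U2 k) * A) *\<^sub>v x" using f(9) by simp
    also have "\<dots> = 1\<^sub>m n *\<^sub>v x - (inv_mat (U2 k) * A) *\<^sub>v x"
      by (rule minus_mult_distrib_mat_vec[OF one_carrier_mat mult_carrier_mat[OF W A] xc])
    also have "(inv_mat (U2 k) * A) *\<^sub>v x = inv_mat (U2 k) *\<^sub>v ?one"
      using assoc_mult_mat_vec[OF W A xc] Ax by simp
    finally show "((inv_mat (U2 k) * V2 k) *\<^sub>v x) $ a = x $ a - (inv_mat (U2 k) *\<^sub>v ?one) $ a"
      using a xc W by simp
  qed
  have Hx: "\<And>a. a < n \<Longrightarrow> (H2 *\<^sub>v x) $ a < x $ a"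
  proof -
    fix a assume a: "a < n"
    define y where "y k = (inv_mat (U2 k) *\<^sub>v ?one) $ a" for k
    have ypos: "\<And>k. k < p \<Longrightarrow> y k > 0" unfolding y_def
    proof -
      fix k assume k: "k < p"
      note f = splitting_facts[OF s2[OF k]]
      show "(inv_mat (U2 k) *\<^sub>v ?one) $ a > 0" by (rule row_pos[OF f(4) f(2) f(6) f(7) a])
    qed
    have "(H2 *\<^sub>v x) $ a = (\<Sum>b\<in>{0..<n}. H2 $$ (a,b) * x $ b)" by (rule mv_entry[OF H2c xc a])
    also have "\<dots> = (\<Sum>b\<in>{0..<n}. \<Sum>k<p. E k $$ (a,a) * ((inv_mat (U2 k) * V2 k) $$ (a,b) * x $ b))"
      unfolding H2_def using H_entry(2)[OF M2 a] by (simp add: sum_distrib_right mult.assoc)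
    also have "\<dots> = (\<Sum>k<p. E k $$ (a,a) * (\<Sum>b\<in>{0..<n}. (inv_mat (U2 k) * V2 k) $$ (a,b) * x $ b))"
      by (subst sum.swap) (simp add: sum_distrib_left)
    also have "\<dots> = (\<Sum>k<p. E k $$ (a,a) * (x $ a - y k))"
    proof (rule sum.cong)
      fix k assume "k \<in> {..<p}"
      hence k: "k < p" by simp
      note f = splitting_facts[OF s2[OF k]]
      have P: "inv_mat (U2 k) * V2 k \<in> carrier_mat n n" using f by auto
      show "E k $$ (a,a) * (\<Sum>b\<in>{0..<n}. (inv_mat (U2 k) * V2 k) $$ (a,b) * x $ b) = E k $$ (a,a) * (x $ a - y k)"
        using mv_entry[OF P xc a, symmetric] Px[OF k a] unfolding y_def by simp
    qed simp
    also have "\<dots> = x $ a * (\<Sum>k<p. E k $$ (a,a)) - (\<Sum>k<p. E k $$ (a,a) * y k)"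
      by (simp add: algebra_simps sum_subtractf sum_distrib_left)
    also have "\<dots> = x $ a - (\<Sum>k<p. E k $$ (a,a) * y k)" using E_facts(1)[OF M2 a] by simp
    also have "\<dots> < x $ a"
    proof -
      obtain k where k: "k < p" "E k $$ (a,a) > 0"
      proof (rule ccontr)
        assume "\<not> thesis"
        hence "\<forall>k<p. E k $$ (a,a) = 0" using that E_facts(2)[OF M2 a] by force
        thus False using E_facts(1)[OF M2 a] by simp
      qed
      have "0 < (\<Sum>k<p. E k $$ (a,a) * y k)"
        by (rule sum_pos2[of "{..<p}" k]) (use k ypos E_facts(2)[OF M2 a] in \<open>auto intro!: mult_nonneg_nonneg simp: less_imp_le\<close>)
      thus ?thesis by simp
    qed
    finally show "(H2 *\<^sub>v x) $ a < x $ a" .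
  qed
  have part2: "rho H2 < 1" by (rule rho_lt1[OF H2c n nnH2 xc xpos Hx])
  show ?thesis using part1 part2 unfolding H1_def H2_def by simp
qed

end
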